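(* Let $\mathcal{X}$ be a finite set of actions, $\mathcal{Y}$ a finite set of responses, $\mathcal{H}\subseteq\mathcal{Y}^{\mathcal{X}}$, $\mathrm{cost}:\mathcal{X}\times\mathcal{Y}\to\mathbb{R}_+$. Let $f:2^{\mathcal{X}\times\mathcal{Y}}\to\mathbb{R}_+$ and $Q>0$, and suppose $f$ is submodular and $f(\emptyset)=0$. If $\mathrm{OPT}<\phi_{\min}$, then $\max_{x\in\mathcal{X}}u^f(x,\emptyset)\ge Q/\mathrm{OPT}$.
   Context: The true state is an unknown $h^*\in\mathcal{H}$. An interactive algorithm, given the observed set $S$ of action-response pairs, either selects an action $x$ (observing $(x,h^*(x))$) or terminates; $S^h[\mathcal{A}]$ is the set collected until termination when $h^*=h$; $\mathrm{cost}(\mathcal{A})=\max_{h\in\mathcal{H}}\sum_{(x,y)\in S^h[\mathcal{A}]}\mathrm{cost}(x,y)$; $\mathrm{OPT}$ is the minimum of $\mathrm{cost}(\mathcal{A})$ over interactive algorithms with $f(S^h[\mathcal{A}])\ge Q$ for all $h\in\mathcal{H}$. Version space $V(S)=\{h\in\mathcal{H}\mid\forall(x,y)\in S,\ y=h(x)\}$; $\delta_g(z\mid A)=g(A\cup\{z\})-g(A)$; $u^f(x,S)=\min_{h\in V(S)}\frac{\delta_{\min(f,Q)}((x,h(x))\mid S)}{\mathrm{cost}(x,h(x))}$. $\phi(x)$ is the second-smallest value of the multiset $\{\mathrm{cost}(x,y)\mid y\in\mathcal{Y}\}$ and $\phi_{\min}=\min_{x\in\mathcal{X}}\phi(x)$.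 *)

theory Defs
  imports Complex_Main "HOL-Library.FuncSet" "HOL-Library.Multiset" "HOL-Library.Extended_Real"
begin

text \<open>Observed sets S are sets of action-response pairs. An interactive algorithm is
  a function mapping the observed set to either an action (Some x) or termination (None).\<close>

type_synonym ('x, 'y) alg = "('x \<times> 'y) set \<Rightarrow> 'x option"

definition valid_alg :: "'x set \<Rightarrow> ('x, 'y) alg \<Rightarrow> bool" where
  "valid_alg X A \<longleftrightarrow> (\<forall>S x. A S = Some x \<longrightarrow> x \<in> X)"

primrec run :: "('x, 'y) alg \<Rightarrow> ('x \<Rightarrow> 'y) \<Rightarrow> nat \<Rightarrow> ('x \<times> 'y) set" where
  "run A h 0 = {}"
| "run A h (Suc n) = (case A (run A h n) of None \<Rightarrow> run A h n
                        | Some x \<Rightarrow> insert (x, h x) (run A h n))"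

definition terminates :: "('x, 'y) alg \<Rightarrow> ('x \<Rightarrow> 'y) \<Rightarrow> bool" where
  "terminates A h \<longleftrightarrow> (\<exists>n. A (run A h n) = None)"

definition collected :: "('x, 'y) alg \<Rightarrow> ('x \<Rightarrow> 'y) \<Rightarrow> ('x \<times> 'y) set" where
  "collected A h = run A h (LEAST n. A (run A h n) = None)"

definition alg_cost :: "('x \<Rightarrow> 'y) set \<Rightarrow> ('x \<Rightarrow> 'y \<Rightarrow> real) \<Rightarrow> ('x, 'y) alg \<Rightarrow> real" where
  "alg_cost H cost A = Max ((\<lambda>h. \<Sum>(x,y)\<in>collected A h. cost x y) ` H)"

definition feasible ::
  "'x set \<Rightarrow> ('x \<Rightarrow> 'y) set \<Rightarrow> (('x \<times> 'y) set \<Rightarrow> real) \<Rightarrow> real \<Rightarrow> ('x, 'y) alg \<Rightarrow> bool" where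
  "feasible X H f Q A \<longleftrightarrow> valid_alg X A \<and>
     (\<forall>h\<in>H. terminates A h \<and> f (collected A h) \<ge> Q)"

text \<open>OPT as an extended real (= \<infinity> if no feasible algorithm exists).\<close>
definition OPT ::
  "'x set \<Rightarrow> ('x \<Rightarrow> 'y) set \<Rightarrow> ('x \<Rightarrow> 'y \<Rightarrow> real) \<Rightarrow> (('x \<times> 'y) set \<Rightarrow> real) \<Rightarrow> real \<Rightarrow> ereal" where
  "OPT X H cost f Q = (INF A \<in> {A. feasible X H f Q A}. ereal (alg_cost H cost A))"

definition version_space :: "('x \<Rightarrow> 'y) set \<Rightarrow> ('x \<times> 'y) set \<Rightarrow> ('x \<Rightarrow> 'y) set" where
  "version_space H S = {h \<in> H. \<forall>(x,y)\<in>S. y = h x}"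

definition marg_gain :: "(('x \<times> 'y) set \<Rightarrow> real) \<Rightarrow> ('x \<times> 'y) \<Rightarrow> ('x \<times> 'y) set \<Rightarrow> real" where
  "marg_gain g z A = g (insert z A) - g A"

definition util :: "('x \<Rightarrow> 'y) set \<Rightarrow> ('x \<Rightarrow> 'y \<Rightarrow> real) \<Rightarrow> (('x \<times> 'y) set \<Rightarrow> real) \<Rightarrow> real
     \<Rightarrow> 'x \<Rightarrow> ('x \<times> 'y) set \<Rightarrow> real" where
  "util H cost f Q x S =
     Min ((\<lambda>h. marg_gain (\<lambda>T. min (f T) Q) (x, h x) S / cost x (h x)) ` version_space H S)"

definition phi :: "'y set \<Rightarrow> ('x \<Rightarrow> 'y \<Rightarrow> real) \<Rightarrow> 'x \<Rightarrow> real" where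
  "phi Y cost x = sorted_list_of_multiset (image_mset (cost x) (mset_set Y)) ! 1"

definition phi_min :: "'x set \<Rightarrow> 'y set \<Rightarrow> ('x \<Rightarrow> 'y \<Rightarrow> real) \<Rightarrow> real" where
  "phi_min X Y cost = Min (phi Y cost ` X)"

definition submodular_on :: "'a set \<Rightarrow> ('a set \<Rightarrow> real) \<Rightarrow> bool" where
  "submodular_on U f \<longleftrightarrow> (\<forall>A B. A \<subseteq> B \<and> B \<subseteq> U \<longrightarrow>
      (\<forall>z \<in> U - B. f (insert z B) - f B \<le> f (insert z A) - f A))"

end

theory Submission
  imports Defs
begin

lemma run_mono1: "run A h n \<subseteq> run A h (Suc n)"
  by (cases "A (run A h n)") auto

lemma run_mono_le: "m \<le> n \<Longrightarrow> run A h m \<subseteq> run A h n"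
  using lift_Suc_mono_le[of "run A h", OF run_mono1] by blast

lemma run_stop: assumes "A (run A h n) = None" "n \<le> m" shows "run A h m = run A h n"
  using assms(2)
proof (induction m rule: dec_induct)
  case base then show ?case by simp
next
  case (step m) then show ?case using assms(1) by simp
qed

lemma run_finite: "finite (run A h n)"
  by (induction n) (auto split: option.splits)

lemma run_graph: "\<forall>(x,y)\<in>run A h n. y = h x"
  by (induction n) (auto split: option.splits)

lemma run_subset:
  assumes v: "valid_alg X A" and h: "h \<in> X \<rightarrow>\<^sub>E Y" shows "run A h n \<subseteq> X \<times> Y"
proof (induction n)
  case 0 then show ?case by simp
next
  case (Suc n)
  show ?case
  proof (cases "A (run A h n)")
    case None then show ?thesis using Suc by simp
  next
    case (Some x)
    have xX: "x \<in> X" using v Some unfolding valid_alg_def by blast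
    have "h x \<in> Y" using PiE_mem[OF h xX] .
    then show ?thesis using Suc Some xX by simp
  qed
qed

lemma run_in_collected:
  assumes "terminates A h" "A (run A h n) = Some x"
  shows "run A h (Suc n) \<subseteq> collected A h"
proof -
  define N where "N = (LEAST n. A (run A h n) = None)"
  obtain m where m: "A (run A h m) = None" using assms(1) unfolding terminates_def by blast
  have NN: "A (run A h N) = None" unfolding N_def by (rule LeastI[of _ m]) (rule m)
  have "n < N"
  proof (rule ccontr)
    assume "\<not> n < N"
    then have "run A h n = run A h N" using run_stop[of A h N n, OF NN] by simp
    then show False using NN assms(2) by simp
  qed
  then show ?thesis unfolding collected_def N_def[symmetric] by (intro run_mono_le) simp
qed

lemma collected_finite: "finite (collected A h)"
  unfolding collected_def by (rule run_finite)

lemma phi_unique: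
  assumes "finite Y" "y1 \<in> Y" "y2 \<in> Y" "cost x y1 < phi Y cost x" "cost x y2 < phi Y cost x"
  shows "y1 = y2"
proof (rule ccontr)
  assume ne: "y1 \<noteq> y2"
  define M where "M = image_mset (cost x) (mset_set Y)"
  have "mset_set Y = add_mset y1 (add_mset y2 (mset_set (Y - {y1} - {y2})))"
    using assms ne by (metis Diff_iff finite_Diff mset_set.remove singletonD)
  then have M: "M = add_mset (cost x y1) (add_mset (cost x y2) (image_mset (cost x) (mset_set (Y - {y1} - {y2}))))"
    unfolding M_def by simp
  define l where "l = sorted_list_of_multiset M"
  have ml: "mset l = M" and sl: "sorted l" unfolding l_def by simp_all
  have "length l = size M" using ml by (metis size_mset)
  then have "length l \<ge> 2" using M by simp
  then obtain a l' where l1: "l = a # l'" "length l' \<ge> 1" by (cases l) auto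
  then obtain b rest where "l' = b # rest" by (cases l') auto
  with l1 have l: "l = a # b # rest" by simp
  have ph: "phi Y cost x = b" unfolding phi_def M_def[symmetric] l_def[symmetric] l by simp
  have "filter (\<lambda>t. t < b) l = filter (\<lambda>t. t < b) [a]"
    using sl unfolding l by (auto intro!: filter_False)
  then have "length (filter (\<lambda>t. t < b) l) \<le> 1" by simp
  moreover have "size (filter_mset (\<lambda>t. t < b) M) \<ge> 2"
    using M assms(4,5) ph by simp
  moreover have "mset (filter (\<lambda>t. t < b) l) = filter_mset (\<lambda>t. t < b) M"
    using ml by simp
  ultimately show False by (metis size_mset not_less_eq_eq numeral_2_eq_2 One_nat_def)
qed

lemma sub_sum:
  assumes "finite S" "S \<subseteq> U" "submodular_on U f" "f {} = 0"
  shows "f S \<le> (\<Sum>z\<in>S. f {z})"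
  using assms(1,2)
proof (induction S rule: finite_induct)
  case empty then show ?case using assms(4) by simp
next
  case (insert z S)
  have "f (insert z S) - f S \<le> f (insert z {}) - f {}"
    using assms(3) insert unfolding submodular_on_def by blast
  then show ?case using insert assms(4) by simp
qed

lemma min_sum:
  fixes g :: "'a \<Rightarrow> real"
  assumes "finite S" "\<forall>z\<in>S. g z \<ge> 0" "Q \<ge> 0"
  shows "min (sum g S) Q \<le> (\<Sum>z\<in>S. min (g z) Q)"
  using assms(1,2)
proof (induction S rule: finite_induct)
  case empty then show ?case using assms(3) by simp
next
  case (insert z S)
  have "sum g S \<ge> 0" using insert by (simp add: sum_nonneg)
  then have "min (g z + sum g S) Q \<le> min (g z) Q + min (sum g S) Q"
    using insert assms(3) by (simp add: min_def)
  then show ?case using insert by simp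
qed

lemma ratio:
  fixes g c :: "'a \<Rightarrow> real"
  assumes "finite S" "S \<noteq> {}" "\<forall>z\<in>S. c z > 0" "Q \<le> sum g S"
  shows "\<exists>z\<in>S. Q / sum c S \<le> g z / c z"
proof (rule ccontr)
  assume "\<not> ?thesis"
  then have lt: "\<forall>z\<in>S. g z / c z < Q / sum c S" by auto
  have C: "sum c S > 0" using assms by (simp add: sum_pos)
  have "\<forall>z\<in>S. g z < Q / sum c S * c z"
    using lt assms(3) by (auto simp: divide_less_eq)
  then have "sum g S < (\<Sum>z\<in>S. Q / sum c S * c z)"
    using assms(1,2) by (intro sum_strict_mono) auto
  also have "\<dots> = Q / sum c S * sum c S" by (rule sum_distrib_left[symmetric])
  also have "\<dots> = Q" using C by simp
  finally show False using assms(4) by simp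
qed

lemma core:
  fixes X :: "'x set" and Y :: "'y set" and H :: "('x \<Rightarrow> 'y) set"
    and cost :: "'x \<Rightarrow> 'y \<Rightarrow> real" and f :: "('x \<times> 'y) set \<Rightarrow> real" and Q :: real
  assumes fX: "finite X" and fY: "finite Y" and HP: "H \<subseteq> X \<rightarrow>\<^sub>E Y" and Hne: "H \<noteq> {}"
    and cpos: "\<forall>x\<in>X. \<forall>y\<in>Y. cost x y > 0" and fnn: "\<forall>S \<subseteq> X \<times> Y. f S \<ge> 0" and Q: "Q > 0"
    and sm: "submodular_on (X \<times> Y) f" and f0: "f {} = 0"
    and feas: "feasible X H f Q A" and lt: "alg_cost H cost A < phi_min X Y cost"
  shows "alg_cost H cost A > 0 \<and> (MAX x\<in>X. util H cost f Q x {}) \<ge> Q / alg_cost H cost A"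
proof -
  have valid: "valid_alg X A" and trm: "\<And>h. h \<in> H \<Longrightarrow> terminates A h"
    and fQ: "\<And>h. h \<in> H \<Longrightarrow> Q \<le> f (collected A h)"
    using feas unfolding feasible_def by auto
  have finH: "finite H" using finite_PiE[OF fX, of "\<lambda>_. Y"] fY HP finite_subset by blast
  define c where "c = alg_cost H cost A"
  have csle: "(\<Sum>(x,y)\<in>collected A h. cost x y) \<le> c" if "h \<in> H" for h
    unfolding c_def alg_cost_def by (rule Max_ge) (use finH that in auto)
  have colsub: "collected A h \<subseteq> X \<times> Y" if "h \<in> H" for h
    unfolding collected_def using run_subset[OF valid] HP that by blast
  have cheap: "cost x y < phi Y cost x \<and> x \<in> X \<and> y \<in> Y"
    if h: "h \<in> H" and xy: "(x,y) \<in> collected A h" for h x y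
  proof -
    have xX: "x \<in> X" and yY: "y \<in> Y" using colsub[OF h] xy by auto
    have "(\<lambda>(a,b). cost a b) (x,y) \<le> sum (\<lambda>(a,b). cost a b) (collected A h)"
      by (rule member_le_sum) (use xy collected_finite colsub[OF h] cpos in \<open>force+\<close>)
    then have "cost x y \<le> c" using csle[OF h] by simp
    moreover have "phi_min X Y cost \<le> phi Y cost x"
      unfolding phi_min_def by (rule Min_le) (use fX xX in auto)
    ultimately show ?thesis using lt xX yY unfolding c_def by simp
  qed
  obtain h0 where h0: "h0 \<in> H" using Hne by blast
  have runeq: "run A h n = run A h0 n" if h: "h \<in> H" for h n
  proof (induction n)
    case 0 then show ?case by simp
  next
    case (Suc n)
    show ?case
    proof (cases "A (run A h0 n)")
      case None then show ?thesis using Suc by simp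
    next
      case (Some x')
      then have Sh: "A (run A h n) = Some x'" using Suc by simp
      have "(x', h x') \<in> run A h (Suc n)" using Sh by simp
      then have a: "(x', h x') \<in> collected A h" using run_in_collected[OF trm[OF h] Sh] by blast
      have "(x', h0 x') \<in> run A h0 (Suc n)" using Some by simp
      then have b: "(x', h0 x') \<in> collected A h0" using run_in_collected[OF trm[OF h0] Some] by blast
      have c1: "cost x' (h x') < phi Y cost x'" "h x' \<in> Y" using cheap[OF h a] by auto
      have c2: "cost x' (h0 x') < phi Y cost x'" "h0 x' \<in> Y" using cheap[OF h0 b] by auto
      have "h x' = h0 x'" by (rule phi_unique[OF fY c1(2) c2(2) c1(1) c2(1)])
      then show ?thesis using Some Sh Suc by simp
    qed
  qed
  have coleq: "collected A h = collected A h0" if "h \<in> H" for h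
    unfolding collected_def using runeq[OF that] by simp
  define S0 where "S0 = collected A h0"
  have S0fin: "finite S0" unfolding S0_def by (rule collected_finite)
  have S0sub: "S0 \<subseteq> X \<times> Y" unfolding S0_def by (rule colsub[OF h0])
  have QS0: "Q \<le> f S0" unfolding S0_def by (rule fQ[OF h0])
  have S0ne: "S0 \<noteq> {}" using QS0 f0 Q by auto
  have agree: "h x = y" if "(x,y) \<in> S0" "h \<in> H" for x y h
  proof -
    have "(x,y) \<in> collected A h" using that coleq[OF that(2)] unfolding S0_def by simp
    then show ?thesis using run_graph[of A h "LEAST n. A (run A h n) = None"]
      unfolding collected_def by auto
  qed
  have util_eq: "util H cost f Q x {} = min (f {(x,y)}) Q / cost x y" if xy: "(x,y) \<in> S0" for x y
  proof -
    have vs: "version_space H {} = H" unfolding version_space_def by simp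
    have "(\<lambda>h. marg_gain (\<lambda>T. min (f T) Q) (x, h x) {} / cost x (h x)) ` H
          = {min (f {(x,y)}) Q / cost x y}"
      using agree[OF xy] Hne f0 Q by (auto simp: marg_gain_def)
    then show ?thesis unfolding util_def vs by simp
  qed
  define g where "g = (\<lambda>z. min (f {z}) Q)"
  define cc where "cc = (\<lambda>(a::'x,b::'y). cost a b)"
  have "Q \<le> min (f S0) Q" using QS0 Q by simp
  also have "\<dots> \<le> min (\<Sum>z\<in>S0. f {z}) Q"
    using sub_sum[OF S0fin S0sub sm f0] by simp
  also have "\<dots> \<le> sum g S0" unfolding g_def
  proof (rule min_sum[OF S0fin])
    show "\<forall>z\<in>S0. 0 \<le> f {z}"
    proof
      fix z assume "z \<in> S0"
      then have "{z} \<subseteq> X \<times> Y" using S0sub by blast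
      then show "0 \<le> f {z}" using fnn by blast
    qed
  qed (use Q in simp)
  finally have Qg: "Q \<le> sum g S0" .
  have ccpos: "\<forall>z\<in>S0. cc z > 0" using S0sub cpos unfolding cc_def by auto
  obtain z where zS: "z \<in> S0" and zr: "Q / sum cc S0 \<le> g z / cc z"
    using ratio[OF S0fin S0ne ccpos Qg] by blast
  obtain x y where z: "z = (x,y)" by (cases z)
  have C: "sum cc S0 > 0" using ccpos S0fin S0ne by (simp add: sum_pos)
  have Cc: "sum cc S0 \<le> c" using csle[OF h0] unfolding cc_def S0_def by simp
  have cpos': "c > 0" using C Cc by simp
  have xX: "x \<in> X" using zS z S0sub by auto
  have "Q / c \<le> Q / sum cc S0" using C Cc Q by (intro divide_left_mono) auto
  also have "\<dots> \<le> util H cost f Q x {}" using zr util_eq[of x y] zS unfolding z g_def cc_def by simp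
  also have "\<dots> \<le> (MAX x\<in>X. util H cost f Q x {})" by (rule Max_ge) (use fX xX in auto)
  finally have "Q / c \<le> (MAX x\<in>X. util H cost f Q x {})" .
  then show ?thesis using cpos' unfolding c_def by blast
qed

lemma div_swap:
  fixes Q M c :: real
  assumes "Q > 0" "c > 0" "M > 0" "Q / c \<le> M"
  shows "Q / M \<le> c"
proof -
  have "Q \<le> M * c" using assms(2,4) by (simp add: pos_divide_le_eq)
  then show ?thesis using assms(3) by (simp add: pos_divide_le_eq mult.commute)
qed

theorem lemma5:
  fixes X :: "'x set" and Y :: "'y set" and H :: "('x \<Rightarrow> 'y) set"
    and cost :: "'x \<Rightarrow> 'y \<Rightarrow> real" and f :: "('x \<times> 'y) set \<Rightarrow> real" and Q :: real
  assumes "finite X" "X \<noteq> {}" "finite Y" "card Y \<ge> 2"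
    and "H \<subseteq> X \<rightarrow>\<^sub>E Y" "H \<noteq> {}"
    and "\<forall>x\<in>X. \<forall>y\<in>Y. cost x y > 0"
    and "\<forall>S \<subseteq> X \<times> Y. f S \<ge> 0"
    and "Q > 0"
    and "submodular_on (X \<times> Y) f"
    and "f {} = 0"
    and "OPT X H cost f Q < ereal (phi_min X Y cost)"
  shows "(MAX x\<in>X. util H cost f Q x {}) \<ge> Q / real_of_ereal (OPT X H cost f Q)"
proof -
  define M where "M = (MAX x\<in>X. util H cost f Q x {})"
  note cr = core[OF assms(1,3,5,6,7,8,9,10,11)]
  obtain A0 where A0: "feasible X H f Q A0" "alg_cost H cost A0 < phi_min X Y cost"
    using assms(12) unfolding OPT_def by (auto simp: INF_less_iff)
  have c0: "alg_cost H cost A0 > 0" "Q / alg_cost H cost A0 \<le> M"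
    using cr[OF A0] unfolding M_def by auto
  have Mpos: "M > 0" using c0 assms(9) by (meson divide_pos_pos less_le_trans)
  have bound: "Q / M \<le> alg_cost H cost A" if "feasible X H f Q A" for A
  proof (cases "alg_cost H cost A < phi_min X Y cost")
    case True
    then show ?thesis using cr[OF that True] Mpos assms(9) div_swap unfolding M_def by blast
  next
    case False
    have "Q / M \<le> alg_cost H cost A0" using div_swap[OF assms(9) c0(1) Mpos c0(2)] .
    then show ?thesis using False A0(2) by linarith
  qed
  have lo: "ereal (Q / M) \<le> OPT X H cost f Q"
    unfolding OPT_def by (rule INF_greatest) (use bound in simp)
  obtain oo where o: "OPT X H cost f Q = ereal oo"
    using lo assms(12) by (cases "OPT X H cost f Q") auto
  have "Q / M \<le> oo" using lo o by simp
  moreover have "Q / M > 0" using Mpos assms(9) by simp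
  ultimately have "Q / oo \<le> M" using Mpos assms(9)
    by (metis div_swap less_le_trans)
  then show ?thesis using o unfolding M_def by simp
qed

end
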